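(* Let $R$ and $S$ be commutative rings with identity, $f:R\to S$ a ring homomorphism, and $J$ a nonzero proper ideal of $S$. Then $R\bowtie^f J$ is a pm-ring if and only if $R$ is a pm-ring and, for every prime ideal $\mathfrak{q}$ of $S$ with $J\not\subseteq\mathfrak{q}$, the following equality holds: $$\big\lvert \big(\operatorname{Max}(S)\cap V(\mathfrak{q})\big)\setminus V(J)\big\rvert + \big\lvert \operatorname{Max}(R)\cap V\big(f^{-1}(\mathfrak{q}+J)\big)\big\rvert = 1.$$
   Context: The amalgamation of $R$ with $S$ along $J$ with respect to $f$ is the subring $R\bowtie^f J:=\{(r,f(r)+j)\mid r\in R,\ j\in J\}$ of $R\times S$. A commutative ring is a pm-ring if every prime ideal is contained in a unique maximal ideal. For a commutative ring $A$ and an ideal $I$ of $A$, $\operatorname{Max}(A)$ denotes the set of maximal ideals of $A$ and $V(I)$ the set of prime ideals of $A$ containing $I$ (so $V(R)=\emptyset$). *)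

theory Defs
  imports "HOL-Algebra.Algebra"
begin

definition amalg :: "('a, 'm) ring_scheme \<Rightarrow> ('b, 'n) ring_scheme \<Rightarrow> ('a \<Rightarrow> 'b) \<Rightarrow> 'b set \<Rightarrow> ('a \<times> 'b) ring"
  where "amalg R S f J = (RDirProd R S)\<lparr>carrier :=
           {(r, f r \<oplus>\<^bsub>S\<^esub> j) | r j. r \<in> carrier R \<and> j \<in> J}\<rparr>"

definition MaxSpec :: "('a, 'm) ring_scheme \<Rightarrow> 'a set set"
  where "MaxSpec A = {M. maximalideal M A}"

definition VarI :: "('a, 'm) ring_scheme \<Rightarrow> 'a set \<Rightarrow> 'a set set"
  where "VarI A I = {P. primeideal P A \<and> I \<subseteq> P}"

definition pm_ring :: "('a, 'm) ring_scheme \<Rightarrow> bool"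
  where "pm_ring A \<longleftrightarrow> (\<forall>P. primeideal P A \<longrightarrow> (\<exists>!M. maximalideal M A \<and> P \<subseteq> M))"

end

theory Submission
  imports Defs
begin

lemma cring_idealI:
  fixes A (structure)
  assumes "cring A" "I \<subseteq> carrier A" "\<zero> \<in> I"
    and add: "\<And>a b. a \<in> I \<Longrightarrow> b \<in> I \<Longrightarrow> a \<oplus> b \<in> I"
    and mul: "\<And>a x. a \<in> I \<Longrightarrow> x \<in> carrier A \<Longrightarrow> x \<otimes> a \<in> I"
  shows "ideal I A"
proof -
  interpret cring A by fact
  have inv: "\<ominus> a \<in> I" if "a \<in> I" for a
  proof -
    have ac: "a \<in> carrier A" using that assms(2) by auto
    have "\<ominus> a = (\<ominus> \<one>) \<otimes> a" using ac by (simp add: l_minus)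
    thus ?thesis using mul[OF that] by simp
  qed
  show ?thesis
  proof (rule idealI[OF ring_axioms])
    show "subgroup I (add_monoid A)"
      using assms(2,3) inv add by (intro add.subgroupI) (auto simp: a_inv_def)
    show "\<And>a x. a \<in> I \<Longrightarrow> x \<in> carrier A \<Longrightarrow> x \<otimes> a \<in> I" by (rule mul)
    show "\<And>a x. a \<in> I \<Longrightarrow> x \<in> carrier A \<Longrightarrow> a \<otimes> x \<in> I"
      using mul assms(2) m_comm by (metis subsetD)
  qed
qed

lemma set_add_mem:
  fixes R (structure)
  shows "x \<in> I <+> K \<longleftrightarrow> (\<exists>i\<in>I. \<exists>k\<in>K. x = i \<oplus> k)"
  unfolding set_add_def' by auto

lemma max_comb:
  fixes R (structure)
  assumes "cring R" "maximalideal n R" "s \<in> carrier R" "s \<notin> n"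
  shows "\<exists>a\<in>n. \<exists>b\<in>carrier R. \<one> = a \<oplus> b \<otimes> s"
proof -
  interpret cring R by fact
  interpret maximalideal n R by fact
  have id: "ideal (n <+> PIdl s) R" by (intro add_ideals is_ideal cgenideal_ideal assms)
  have sub: "n \<subseteq> n <+> PIdl s"
  proof
    fix x assume "x \<in> n"
    moreover have "\<zero> \<in> PIdl s" using assms(3) unfolding cgenideal_def by (auto intro!: exI[of _ \<zero>])
    moreover have "x = x \<oplus> \<zero>" using \<open>x \<in> n\<close> a_subset by auto
    ultimately show "x \<in> n <+> PIdl s" unfolding set_add_mem by blast
  qed
  have sin: "s \<in> n <+> PIdl s"
  proof -
    have "s = \<zero> \<oplus> \<one> \<otimes> s" using assms(3) by simp
    moreover have "\<one> \<otimes> s \<in> PIdl s" unfolding cgenideal_def by auto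
    ultimately show ?thesis unfolding set_add_mem using additive_subgroup.zero_closed[OF is_additive_subgroup] by blast
  qed
  have "n <+> PIdl s \<subseteq> carrier R" using id ideal.axioms(1) additive_subgroup.a_subset by blast
  then have "n <+> PIdl s = carrier R" using I_maximal[OF id sub] sin assms(4) by auto
  then have "\<one> \<in> n <+> PIdl s" by simp
  then show ?thesis unfolding set_add_mem cgenideal_def by auto
qed

locale amal = ring_hom_cring R S f for R (structure) and S (structure) and f +
  fixes J assumes J: "ideal J S"
begin

abbreviation "A \<equiv> amalg R S f J"

lemma A_carrier: "carrier A = {(r, f r \<oplus>\<^bsub>S\<^esub> j) | r j. r \<in> carrier R \<and> j \<in> J}"
  unfolding amalg_def by simp

lemma A_mult[simp]: "(a,b) \<otimes>\<^bsub>A\<^esub> (c,d) = (a \<otimes>\<^bsub>R\<^esub> c, b \<otimes>\<^bsub>S\<^esub> d)"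
  unfolding amalg_def RDirProd_def DirProd_def by (simp add: monoid.defs)
lemma A_add[simp]: "(a,b) \<oplus>\<^bsub>A\<^esub> (c,d) = (a \<oplus>\<^bsub>R\<^esub> c, b \<oplus>\<^bsub>S\<^esub> d)"
  unfolding amalg_def RDirProd_def DirProd_def by (simp add: monoid.defs)
lemma A_one[simp]: "\<one>\<^bsub>A\<^esub> = (\<one>\<^bsub>R\<^esub>, \<one>\<^bsub>S\<^esub>)"
  unfolding amalg_def RDirProd_def DirProd_def by (simp add: monoid.defs)
lemma A_zero[simp]: "\<zero>\<^bsub>A\<^esub> = (\<zero>\<^bsub>R\<^esub>, \<zero>\<^bsub>S\<^esub>)"
  unfolding amalg_def RDirProd_def DirProd_def by (simp add: monoid.defs)

lemma D_mult[simp]: "(a,b) \<otimes>\<^bsub>RDirProd R S\<^esub> (c,d) = (a \<otimes>\<^bsub>R\<^esub> c, b \<otimes>\<^bsub>S\<^esub> d)"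
  unfolding RDirProd_def DirProd_def by (simp add: monoid.defs)
lemma D_add[simp]: "(a,b) \<oplus>\<^bsub>RDirProd R S\<^esub> (c,d) = (a \<oplus>\<^bsub>R\<^esub> c, b \<oplus>\<^bsub>S\<^esub> d)"
  unfolding RDirProd_def DirProd_def by (simp add: monoid.defs)
lemma D_one[simp]: "\<one>\<^bsub>RDirProd R S\<^esub> = (\<one>\<^bsub>R\<^esub>, \<one>\<^bsub>S\<^esub>)"
  unfolding RDirProd_def DirProd_def by (simp add: monoid.defs)
lemma D_zero[simp]: "\<zero>\<^bsub>RDirProd R S\<^esub> = (\<zero>\<^bsub>R\<^esub>, \<zero>\<^bsub>S\<^esub>)"
  unfolding RDirProd_def DirProd_def by (simp add: monoid.defs)

lemma D_ring: "ring (RDirProd R S)"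
  by (rule RDirProd_ring) (simp_all add: R.ring_axioms S.ring_axioms)

lemma D_neg: assumes "a \<in> carrier R" "b \<in> carrier S"
  shows "\<ominus>\<^bsub>RDirProd R S\<^esub> (a,b) = (\<ominus>\<^bsub>R\<^esub> a, \<ominus>\<^bsub>S\<^esub> b)"
proof -
  interpret D: ring "RDirProd R S" by (rule D_ring)
  show ?thesis
    using assms by (intro D.minus_equality) (simp_all add: RDirProd_carrier R.l_neg S.l_neg)
qed

lemma J_sub: "J \<subseteq> carrier S" using J ideal.axioms(1) additive_subgroup.a_subset by blast

lemma C_sub: "carrier A \<subseteq> carrier (RDirProd R S)"
  using J_sub by (auto simp: A_carrier RDirProd_carrier)

lemma A_def': "A = (RDirProd R S)\<lparr>carrier := carrier A\<rparr>"
  unfolding amalg_def by simp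

lemma A_cring: "cring A"
proof -
  interpret D: ring "RDirProd R S" by (rule D_ring)
  interpret J: ideal J S by (rule J)
  have "subcring (carrier A) (RDirProd R S)"
  proof (rule D.subcringI[OF D.subringI[OF C_sub]])
    show "\<one>\<^bsub>RDirProd R S\<^esub> \<in> carrier A"
      unfolding A_carrier by (auto intro!: exI[of _ "\<zero>\<^bsub>S\<^esub>"] simp: J.additive_subgroup_axioms additive_subgroup.zero_closed)
  next
    fix h assume "h \<in> carrier A"
    then obtain r j where h: "h = (r, f r \<oplus>\<^bsub>S\<^esub> j)" "r \<in> carrier R" "j \<in> J" by (auto simp: A_carrier)
    have jc: "j \<in> carrier S" using h J_sub by auto
    have "\<ominus>\<^bsub>RDirProd R S\<^esub> h = (\<ominus>\<^bsub>R\<^esub> r, \<ominus>\<^bsub>S\<^esub> (f r \<oplus>\<^bsub>S\<^esub> j))"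
      using h jc by (simp add: D_neg)
    also have "\<dots> = (\<ominus>\<^bsub>R\<^esub> r, f (\<ominus>\<^bsub>R\<^esub> r) \<oplus>\<^bsub>S\<^esub> \<ominus>\<^bsub>S\<^esub> j)"
      using h jc by (simp add: S.minus_add ring.hom_a_inv)
    finally show "\<ominus>\<^bsub>RDirProd R S\<^esub> h \<in> carrier A"
      unfolding A_carrier using h J.a_inv_closed by auto
  next
    fix h1 h2 assume "h1 \<in> carrier A" "h2 \<in> carrier A"
    then obtain r j r' j' where h: "h1 = (r, f r \<oplus>\<^bsub>S\<^esub> j)" "r \<in> carrier R" "j \<in> J"
       "h2 = (r', f r' \<oplus>\<^bsub>S\<^esub> j')" "r' \<in> carrier R" "j' \<in> J" by (auto simp: A_carrier)
    have jc: "j \<in> carrier S" "j' \<in> carrier S" using h J_sub by auto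
    have "(f r \<oplus>\<^bsub>S\<^esub> j) \<otimes>\<^bsub>S\<^esub> (f r' \<oplus>\<^bsub>S\<^esub> j') = f (r \<otimes>\<^bsub>R\<^esub> r') \<oplus>\<^bsub>S\<^esub>
       (f r \<otimes>\<^bsub>S\<^esub> j' \<oplus>\<^bsub>S\<^esub> j \<otimes>\<^bsub>S\<^esub> f r' \<oplus>\<^bsub>S\<^esub> j \<otimes>\<^bsub>S\<^esub> j')"
      using h jc by (simp add: S.l_distr S.r_distr S.a_ac)
    moreover have "f r \<otimes>\<^bsub>S\<^esub> j' \<oplus>\<^bsub>S\<^esub> j \<otimes>\<^bsub>S\<^esub> f r' \<oplus>\<^bsub>S\<^esub> j \<otimes>\<^bsub>S\<^esub> j' \<in> J"
      using h jc by (intro J.a_closed J.I_l_closed J.I_r_closed) auto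
    ultimately show "h1 \<otimes>\<^bsub>RDirProd R S\<^esub> h2 \<in> carrier A"
      unfolding A_carrier using h by auto
    have "(f r \<oplus>\<^bsub>S\<^esub> j) \<oplus>\<^bsub>S\<^esub> (f r' \<oplus>\<^bsub>S\<^esub> j') = f (r \<oplus>\<^bsub>R\<^esub> r') \<oplus>\<^bsub>S\<^esub> (j \<oplus>\<^bsub>S\<^esub> j')"
      using h jc by (simp add: S.a_ac)
    then show "h1 \<oplus>\<^bsub>RDirProd R S\<^esub> h2 \<in> carrier A"
      unfolding A_carrier using h J.a_closed by auto
    show "h1 \<otimes>\<^bsub>RDirProd R S\<^esub> h2 = h2 \<otimes>\<^bsub>RDirProd R S\<^esub> h1"
      using h jc by (simp add: R.m_comm S.m_comm)
  qed
  then show ?thesis using D.subcring_iff[OF C_sub] A_def' by metis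
qed

end

context amal begin

definition PI where "PI p = {x \<in> carrier A. fst x \<in> p}"
definition QI where "QI q = {x \<in> carrier A. snd x \<in> q}"

lemma memC: "r \<in> carrier R \<Longrightarrow> j \<in> J \<Longrightarrow> (r, f r \<oplus>\<^bsub>S\<^esub> j) \<in> carrier A"
  unfolding A_carrier by auto

lemma fC: "r \<in> carrier R \<Longrightarrow> (r, f r) \<in> carrier A"
  using memC[of r "\<zero>\<^bsub>S\<^esub>"] J by (simp add: additive_subgroup.zero_closed ideal.axioms(1))

lemma zC: "j \<in> J \<Longrightarrow> (\<zero>\<^bsub>R\<^esub>, j) \<in> carrier A"
  using memC[of "\<zero>\<^bsub>R\<^esub>" j] J_sub by auto

lemma C_elem: "x \<in> carrier A \<Longrightarrow> fst x \<in> carrier R \<and> snd x \<in> carrier S"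
  using C_sub by (auto simp: RDirProd_carrier)

lemma C_elemE: assumes "x \<in> carrier A"
  obtains r j where "x = (r, f r \<oplus>\<^bsub>S\<^esub> j)" "r \<in> carrier R" "j \<in> J"
  using assms unfolding A_carrier by auto

lemma PI_ideal: assumes "ideal p R" shows "ideal (PI p) A"
proof -
  interpret p: ideal p R by fact
  show ?thesis
  proof (rule cring_idealI[OF A_cring])
    show "PI p \<subseteq> carrier A" unfolding PI_def by auto
    show "\<zero>\<^bsub>A\<^esub> \<in> PI p" unfolding PI_def using fC[of "\<zero>\<^bsub>R\<^esub>"] by simp
    show "a \<oplus>\<^bsub>A\<^esub> b \<in> PI p" if "a \<in> PI p" "b \<in> PI p" for a b
      using that cring.cring_simprules(1)[OF A_cring] unfolding PI_def
      by (cases a, cases b) auto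
    show "x \<otimes>\<^bsub>A\<^esub> a \<in> PI p" if "a \<in> PI p" "x \<in> carrier A" for a x
      using that cring.cring_simprules(5)[OF A_cring] C_elem unfolding PI_def
      by (cases a, cases x) (auto intro: p.I_l_closed)
  qed
qed

lemma QI_ideal: assumes "ideal q S" shows "ideal (QI q) A"
proof -
  interpret q: ideal q S by fact
  show ?thesis
  proof (rule cring_idealI[OF A_cring])
    show "QI q \<subseteq> carrier A" unfolding QI_def by auto
    show "\<zero>\<^bsub>A\<^esub> \<in> QI q" unfolding QI_def using fC[of "\<zero>\<^bsub>R\<^esub>"] by simp
    show "a \<oplus>\<^bsub>A\<^esub> b \<in> QI q" if "a \<in> QI q" "b \<in> QI q" for a b
      using that cring.cring_simprules(1)[OF A_cring] unfolding QI_def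
      by (cases a, cases b) auto
    show "x \<otimes>\<^bsub>A\<^esub> a \<in> QI q" if "a \<in> QI q" "x \<in> carrier A" for a x
      using that cring.cring_simprules(5)[OF A_cring] C_elem unfolding QI_def
      by (cases a, cases x) (auto intro: q.I_l_closed)
  qed
qed

lemma oneA: "(\<one>\<^bsub>R\<^esub>, \<one>\<^bsub>S\<^esub>) \<in> carrier A"
  using fC[of "\<one>\<^bsub>R\<^esub>"] by simp

lemma PI_prime: assumes "primeideal p R" shows "primeideal (PI p) A"
proof -
  interpret p: primeideal p R by fact
  show ?thesis
  proof (rule primeidealI[OF PI_ideal[OF p.is_ideal] A_cring])
    show "carrier A \<noteq> PI p"
    proof
      assume "carrier A = PI p"
      then have "(\<one>\<^bsub>R\<^esub>, \<one>\<^bsub>S\<^esub>) \<in> PI p" using oneA by simp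
      then have "\<one>\<^bsub>R\<^esub> \<in> p" unfolding PI_def by simp
      then show False using p.I_notcarr p.one_imp_carrier by simp
    qed
    show "a \<in> PI p \<or> b \<in> PI p" if "a \<in> carrier A" "b \<in> carrier A" "a \<otimes>\<^bsub>A\<^esub> b \<in> PI p" for a b
      using that C_elem[OF that(1)] C_elem[OF that(2)] p.I_prime unfolding PI_def
      by (cases a, cases b) auto
  qed
qed

lemma QI_prime: assumes "primeideal q S" shows "primeideal (QI q) A"
proof -
  interpret q: primeideal q S by fact
  show ?thesis
  proof (rule primeidealI[OF QI_ideal[OF q.is_ideal] A_cring])
    show "carrier A \<noteq> QI q"
    proof
      assume "carrier A = QI q"
      then have "(\<one>\<^bsub>R\<^esub>, \<one>\<^bsub>S\<^esub>) \<in> QI q" using oneA by simp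
      then have "\<one>\<^bsub>S\<^esub> \<in> q" unfolding QI_def by simp
      then show False using q.I_notcarr q.one_imp_carrier by simp
    qed
    show "a \<in> QI q \<or> b \<in> QI q" if "a \<in> carrier A" "b \<in> carrier A" "a \<otimes>\<^bsub>A\<^esub> b \<in> QI q" for a b
      using that C_elem[OF that(1)] C_elem[OF that(2)] q.I_prime unfolding QI_def
      by (cases a, cases b) auto
  qed
qed

lemma ideal_one:
  assumes I: "ideal I A" and zJ: "\<And>j. j \<in> J \<Longrightarrow> (\<zero>\<^bsub>R\<^esub>, j) \<in> I" and one: "(\<one>\<^bsub>R\<^esub>, s) \<in> I"
  shows "I = carrier A"
proof -
  interpret I: ideal I A by fact
  interpret Jj: ideal J S by (rule J)
  have "(\<one>\<^bsub>R\<^esub>, s) \<in> carrier A" using one I.a_subset by auto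
  then obtain j where s: "s = f \<one>\<^bsub>R\<^esub> \<oplus>\<^bsub>S\<^esub> j" "j \<in> J" by (auto simp: A_carrier)
  have jc: "j \<in> carrier S" using s J_sub by auto
  have "(\<one>\<^bsub>R\<^esub>, s) \<oplus>\<^bsub>A\<^esub> (\<zero>\<^bsub>R\<^esub>, \<ominus>\<^bsub>S\<^esub> j) \<in> I"
    using one zJ[OF Jj.a_inv_closed[OF s(2)]] I.a_closed by blast
  moreover have "(\<one>\<^bsub>R\<^esub>, s) \<oplus>\<^bsub>A\<^esub> (\<zero>\<^bsub>R\<^esub>, \<ominus>\<^bsub>S\<^esub> j) = \<one>\<^bsub>A\<^esub>"
    using s jc by (simp add: S.a_assoc S.r_neg)
  ultimately show ?thesis using I.one_imp_carrier by simp
qed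

end

context amal begin

lemma PI_max: assumes "maximalideal p R" shows "maximalideal (PI p) A"
proof -
  have pp: "primeideal p R" using R.maximalideal_prime[OF assms] .
  interpret p: maximalideal p R by fact
  interpret PP: primeideal "PI p" A by (rule PI_prime[OF pp])
  show ?thesis
  proof (rule maximalidealI[OF PI_ideal[OF p.is_ideal] PP.I_notcarr])
    fix I assume I: "ideal I A" "PI p \<subseteq> I" "I \<subseteq> carrier A"
    interpret I: ideal I A by (rule I(1))
    show "I = PI p \<or> I = carrier A"
    proof (cases "I \<subseteq> PI p")
      case True then show ?thesis using I by auto
    next
      case False
      then obtain r t where x: "(r,t) \<in> I" "(r,t) \<notin> PI p" by auto
      have xc: "(r,t) \<in> carrier A" using x I by auto
      then have rc: "r \<in> carrier R" "r \<notin> p" using C_elem[OF xc] x unfolding PI_def by auto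
      obtain a b where ab: "a \<in> p" "b \<in> carrier R" "\<one>\<^bsub>R\<^esub> = a \<oplus>\<^bsub>R\<^esub> b \<otimes>\<^bsub>R\<^esub> r"
        using max_comb[OF R.is_cring assms rc] by blast
      have ac: "a \<in> carrier R" using ab p.a_subset by auto
      have "(a, f a) \<in> I" using I(2) fC[OF ac] ab unfolding PI_def by auto
      moreover have "(b, f b) \<otimes>\<^bsub>A\<^esub> (r,t) \<in> I" using I.I_l_closed[OF x(1) fC[OF ab(2)]] .
      ultimately have "(a, f a) \<oplus>\<^bsub>A\<^esub> ((b, f b) \<otimes>\<^bsub>A\<^esub> (r,t)) \<in> I" using I.a_closed by blast
      then have "(\<one>\<^bsub>R\<^esub>, f a \<oplus>\<^bsub>S\<^esub> f b \<otimes>\<^bsub>S\<^esub> t) \<in> I" using ab by simp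
      moreover have "(\<zero>\<^bsub>R\<^esub>, j) \<in> I" if "j \<in> J" for j
        using I(2) zC[OF that] p.additive_subgroup_axioms additive_subgroup.zero_closed
        unfolding PI_def by fastforce
      ultimately show ?thesis using ideal_one[OF I(1)] by blast
    qed
  qed
qed

lemma QI_max: assumes "maximalideal n S" "\<not> J \<subseteq> n" shows "maximalideal (QI n) A"
proof -
  have pp: "primeideal n S" using S.maximalideal_prime[OF assms(1)] .
  interpret n: maximalideal n S by fact
  interpret PP: primeideal "QI n" A by (rule QI_prime[OF pp])
  interpret Jj: ideal J S by (rule J)
  show ?thesis
  proof (rule maximalidealI[OF QI_ideal[OF n.is_ideal] PP.I_notcarr])
    fix I assume I: "ideal I A" "QI n \<subseteq> I" "I \<subseteq> carrier A"
    interpret I: ideal I A by (rule I(1))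
    show "I = QI n \<or> I = carrier A"
    proof (cases "I \<subseteq> QI n")
      case True then show ?thesis using I by auto
    next
      case False
      then obtain r t where x: "(r,t) \<in> I" "(r,t) \<notin> QI n" by auto
      have xc: "(r,t) \<in> carrier A" using x I by auto
      then have rc: "t \<in> carrier S" "t \<notin> n" "r \<in> carrier R" using C_elem[OF xc] x unfolding QI_def by auto
      obtain a b where ab: "a \<in> n" "b \<in> carrier S" "\<one>\<^bsub>S\<^esub> = a \<oplus>\<^bsub>S\<^esub> b \<otimes>\<^bsub>S\<^esub> t"
        using max_comb[OF S.is_cring assms(1) rc(1,2)] by blast
      have ac: "a \<in> carrier S" using ab n.a_subset by auto
      have zJ: "(\<zero>\<^bsub>R\<^esub>, j) \<in> I" if j: "j \<in> J" for j
      proof -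
        have jc: "j \<in> carrier S" using j J_sub by auto
        have "a \<otimes>\<^bsub>S\<^esub> j \<in> J" using Jj.I_l_closed[OF j ac] .
        moreover have "a \<otimes>\<^bsub>S\<^esub> j \<in> n" using n.I_r_closed[OF ab(1) jc] .
        ultimately have "(\<zero>\<^bsub>R\<^esub>, a \<otimes>\<^bsub>S\<^esub> j) \<in> I" using I(2) zC unfolding QI_def by auto
        moreover have "(\<zero>\<^bsub>R\<^esub>, b \<otimes>\<^bsub>S\<^esub> j) \<otimes>\<^bsub>A\<^esub> (r,t) \<in> I"
          using I.I_l_closed[OF x(1) zC[OF Jj.I_l_closed[OF j ab(2)]]] .
        ultimately have "(\<zero>\<^bsub>R\<^esub>, a \<otimes>\<^bsub>S\<^esub> j) \<oplus>\<^bsub>A\<^esub> ((\<zero>\<^bsub>R\<^esub>, b \<otimes>\<^bsub>S\<^esub> j) \<otimes>\<^bsub>A\<^esub> (r,t)) \<in> I"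
          using I.a_closed by blast
        moreover have "a \<otimes>\<^bsub>S\<^esub> j \<oplus>\<^bsub>S\<^esub> b \<otimes>\<^bsub>S\<^esub> j \<otimes>\<^bsub>S\<^esub> t = (a \<oplus>\<^bsub>S\<^esub> b \<otimes>\<^bsub>S\<^esub> t) \<otimes>\<^bsub>S\<^esub> j"
          using ac ab jc rc by (simp add: S.l_distr S.r_distr S.m_ac)
        ultimately show ?thesis using ab(3)[symmetric] jc rc by simp
      qed
      obtain j0 where j0: "j0 \<in> J" "j0 \<notin> n" using assms(2) by auto
      have j0c: "j0 \<in> carrier S" using j0 J_sub by auto
      obtain a' b' where ab': "a' \<in> n" "b' \<in> carrier S" "\<one>\<^bsub>S\<^esub> = a' \<oplus>\<^bsub>S\<^esub> b' \<otimes>\<^bsub>S\<^esub> j0"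
        using max_comb[OF S.is_cring assms(1) j0c j0(2)] by blast
      have a'c: "a' \<in> carrier S" using ab' n.a_subset by auto
      have cJ: "b' \<otimes>\<^bsub>S\<^esub> j0 \<in> J" using Jj.I_l_closed[OF j0(1) ab'(2)] .
      have "a' = (a' \<oplus>\<^bsub>S\<^esub> b' \<otimes>\<^bsub>S\<^esub> j0) \<oplus>\<^bsub>S\<^esub> \<ominus>\<^bsub>S\<^esub> (b' \<otimes>\<^bsub>S\<^esub> j0)"
        using a'c ab'(2) j0c by (simp add: S.a_assoc S.r_neg)
      then have "a' = f \<one>\<^bsub>R\<^esub> \<oplus>\<^bsub>S\<^esub> \<ominus>\<^bsub>S\<^esub> (b' \<otimes>\<^bsub>S\<^esub> j0)" using ab'(3) by simp
      then have "(\<one>\<^bsub>R\<^esub>, a') \<in> carrier A" using memC[OF R.one_closed Jj.a_inv_closed[OF cJ]] by simp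
      then have "(\<one>\<^bsub>R\<^esub>, a') \<in> I" using I(2) ab'(1) unfolding QI_def by auto
      then show ?thesis using ideal_one[OF I(1) zJ] by blast
    qed
  qed
qed

end

context amal begin

lemma classify:
  assumes "primeideal P A"
  shows "(\<exists>p. primeideal p R \<and> P = PI p) \<or> (\<exists>q. primeideal q S \<and> \<not> J \<subseteq> q \<and> P = QI q)"
proof -
  interpret P: primeideal P A by fact
  interpret Jj: ideal J S by (rule J)
  show ?thesis
  proof (cases "\<forall>j\<in>J. (\<zero>\<^bsub>R\<^esub>, j) \<in> P")
    case True
    define p where "p = {r \<in> carrier R. \<exists>s. (r,s) \<in> P}"
    have eq: "P = PI p"
    proof
      show "P \<subseteq> PI p"
      proof
        fix x assume x: "x \<in> P"
        then have "x \<in> carrier A" using P.a_subset by auto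
        then show "x \<in> PI p" using x C_elem[OF \<open>x \<in> carrier A\<close>] unfolding PI_def p_def by (cases x) auto
      qed
      show "PI p \<subseteq> P"
      proof
        fix x assume x: "x \<in> PI p"
        then have xc: "x \<in> carrier A" and "fst x \<in> p" unfolding PI_def by auto
        then obtain s' where s': "(fst x, s') \<in> P" unfolding p_def by auto
        obtain r j where rj: "x = (r, f r \<oplus>\<^bsub>S\<^esub> j)" "r \<in> carrier R" "j \<in> J" using C_elemE[OF xc] by blast
        have s'': "(r, s') \<in> P" using s' rj(1) by simp
        have "(r, s') \<in> carrier A" using s'' P.a_subset by auto
        then obtain r2 j' where rj': "(r, s') = (r2, f r2 \<oplus>\<^bsub>S\<^esub> j')" "r2 \<in> carrier R" "j' \<in> J"
          using C_elemE by blast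
        have jc: "j \<in> carrier S" "j' \<in> carrier S" using rj rj' J_sub by auto
        have "(r, s') \<oplus>\<^bsub>A\<^esub> (\<zero>\<^bsub>R\<^esub>, \<ominus>\<^bsub>S\<^esub> j' \<oplus>\<^bsub>S\<^esub> j) \<in> P"
        proof -
          have "(\<zero>\<^bsub>R\<^esub>, \<ominus>\<^bsub>S\<^esub> j' \<oplus>\<^bsub>S\<^esub> j) \<in> P"
            using True Jj.a_closed[OF Jj.a_inv_closed[OF rj'(3)] rj(3)] by blast
          then show ?thesis using s'' P.a_closed by blast
        qed
        moreover have "(r, s') \<oplus>\<^bsub>A\<^esub> (\<zero>\<^bsub>R\<^esub>, \<ominus>\<^bsub>S\<^esub> j' \<oplus>\<^bsub>S\<^esub> j) = x"
          using rj rj' jc by (simp add: S.a_assoc S.r_neg2)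
        ultimately show "x \<in> P" by simp
      qed
    qed
    have "primeideal p R"
    proof (rule primeidealI[OF _ R.is_cring])
      show "ideal p R"
      proof (rule cring_idealI[OF R.is_cring])
        show "p \<subseteq> carrier R" unfolding p_def by auto
        show "\<zero>\<^bsub>R\<^esub> \<in> p"
        proof -
          have "\<zero>\<^bsub>A\<^esub> \<in> P" by (rule additive_subgroup.zero_closed[OF P.additive_subgroup_axioms])
          then have "(\<zero>\<^bsub>R\<^esub>, \<zero>\<^bsub>S\<^esub>) \<in> P" by simp
          then show ?thesis unfolding p_def by blast
        qed
        show "a \<oplus>\<^bsub>R\<^esub> b \<in> p" if "a \<in> p" "b \<in> p" for a b
        proof -
          obtain s t where "(a,s) \<in> P" "(b,t) \<in> P" using \<open>a \<in> p\<close> \<open>b \<in> p\<close> unfolding p_def by auto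
          then have "(a,s) \<oplus>\<^bsub>A\<^esub> (b,t) \<in> P" using P.a_closed by blast
          then show ?thesis using that unfolding p_def by auto
        qed
        show "x \<otimes>\<^bsub>R\<^esub> a \<in> p" if "a \<in> p" "x \<in> carrier R" for a x
        proof -
          obtain s where "(a,s) \<in> P" using \<open>a \<in> p\<close> unfolding p_def by auto
          then have "(x, f x) \<otimes>\<^bsub>A\<^esub> (a,s) \<in> P" using P.I_l_closed fC[OF that(2)] by blast
          then show ?thesis using that unfolding p_def by auto
        qed
      qed
      show "carrier R \<noteq> p"
      proof
        assume "carrier R = p"
        then have "\<one>\<^bsub>R\<^esub> \<in> p" by (metis R.one_closed)
        then obtain s where o1: "(\<one>\<^bsub>R\<^esub>, s) \<in> P" unfolding p_def by auto
        have "P = carrier A" by (rule ideal_one[OF P.is_ideal _ o1]) (use True in blast)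
        then show False using P.I_notcarr by simp
      qed
      show "a \<in> p \<or> b \<in> p" if "a \<in> carrier R" "b \<in> carrier R" "a \<otimes>\<^bsub>R\<^esub> b \<in> p" for a b
      proof -
        have "(a \<otimes>\<^bsub>R\<^esub> b, f (a \<otimes>\<^bsub>R\<^esub> b)) \<in> PI p" using that fC[of "a \<otimes>\<^bsub>R\<^esub> b"] unfolding PI_def by simp
        then have "(a \<otimes>\<^bsub>R\<^esub> b, f (a \<otimes>\<^bsub>R\<^esub> b)) \<in> P" using eq by simp
        then have "(a, f a) \<otimes>\<^bsub>A\<^esub> (b, f b) \<in> P" using that by simp
        then have "(a, f a) \<in> P \<or> (b, f b) \<in> P" using P.I_prime fC[OF that(1)] fC[OF that(2)] by blast
        then show ?thesis using that unfolding p_def by auto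
      qed
    qed
    then show ?thesis using eq by blast
  next
    case False
    then obtain j0 where j0: "j0 \<in> J" "(\<zero>\<^bsub>R\<^esub>, j0) \<notin> P" by blast
    have j0c: "j0 \<in> carrier S" using j0 J_sub by auto
    have z0: "(\<zero>\<^bsub>R\<^esub>, j0) \<in> carrier A" using zC[OF j0(1)] .
    define q where "q = {s \<in> carrier S. (\<zero>\<^bsub>R\<^esub>, s \<otimes>\<^bsub>S\<^esub> j0) \<in> P}"
    have sC: "(\<zero>\<^bsub>R\<^esub>, s \<otimes>\<^bsub>S\<^esub> j0) \<in> carrier A" if "s \<in> carrier S" for s
      using zC Jj.I_l_closed[OF j0(1) that] by blast
    have key: "x \<otimes>\<^bsub>A\<^esub> (\<zero>\<^bsub>R\<^esub>, j0) = (\<zero>\<^bsub>R\<^esub>, snd x \<otimes>\<^bsub>S\<^esub> j0)" if "x \<in> carrier A" for x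
      using C_elem[OF that] by (cases x) auto
    have eq: "P = QI q"
    proof
      show "P \<subseteq> QI q"
      proof
        fix x assume x: "x \<in> P"
        then have xc: "x \<in> carrier A" using P.a_subset by auto
        have "x \<otimes>\<^bsub>A\<^esub> (\<zero>\<^bsub>R\<^esub>, j0) \<in> P" using P.I_r_closed[OF x z0] .
        then show "x \<in> QI q" using key[OF xc] xc C_elem[OF xc] unfolding QI_def q_def by auto
      qed
      show "QI q \<subseteq> P"
      proof
        fix x assume x: "x \<in> QI q"
        then have xc: "x \<in> carrier A" "(\<zero>\<^bsub>R\<^esub>, snd x \<otimes>\<^bsub>S\<^esub> j0) \<in> P" unfolding QI_def q_def by auto
        then have "x \<otimes>\<^bsub>A\<^esub> (\<zero>\<^bsub>R\<^esub>, j0) \<in> P" using key by simp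
        then show "x \<in> P" using P.I_prime[OF xc(1) z0] j0 by blast
      qed
    qed
    have m1: "(\<zero>\<^bsub>R\<^esub>, a \<otimes>\<^bsub>S\<^esub> j0) \<otimes>\<^bsub>A\<^esub> (\<zero>\<^bsub>R\<^esub>, b \<otimes>\<^bsub>S\<^esub> j0)
       = (\<zero>\<^bsub>R\<^esub>, a \<otimes>\<^bsub>S\<^esub> b \<otimes>\<^bsub>S\<^esub> j0) \<otimes>\<^bsub>A\<^esub> (\<zero>\<^bsub>R\<^esub>, j0)" if "a \<in> carrier S" "b \<in> carrier S" for a b
      using that j0c by (simp add: S.m_ac)
    have "primeideal q S"
    proof (rule primeidealI[OF _ S.is_cring])
      show "ideal q S"
      proof (rule cring_idealI[OF S.is_cring])
        show "q \<subseteq> carrier S" unfolding q_def by auto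
        show "\<zero>\<^bsub>S\<^esub> \<in> q"
        proof -
          have "\<zero>\<^bsub>A\<^esub> \<in> P" by (rule additive_subgroup.zero_closed[OF P.additive_subgroup_axioms])
          then have "(\<zero>\<^bsub>R\<^esub>, \<zero>\<^bsub>S\<^esub> \<otimes>\<^bsub>S\<^esub> j0) \<in> P" using j0c by simp
          then show ?thesis unfolding q_def by blast
        qed
        show "a \<oplus>\<^bsub>S\<^esub> b \<in> q" if "a \<in> q" "b \<in> q" for a b
        proof -
          have "(\<zero>\<^bsub>R\<^esub>, a \<otimes>\<^bsub>S\<^esub> j0) \<oplus>\<^bsub>A\<^esub> (\<zero>\<^bsub>R\<^esub>, b \<otimes>\<^bsub>S\<^esub> j0) \<in> P" using that P.a_closed unfolding q_def by blast
          then show ?thesis using that j0c unfolding q_def by (auto simp: S.l_distr)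
        qed
        show "x \<otimes>\<^bsub>S\<^esub> a \<in> q" if "a \<in> q" "x \<in> carrier S" for a x
        proof -
          have ac: "a \<in> carrier S" using that unfolding q_def by auto
          have "(\<zero>\<^bsub>R\<^esub>, x \<otimes>\<^bsub>S\<^esub> j0) \<otimes>\<^bsub>A\<^esub> (\<zero>\<^bsub>R\<^esub>, a \<otimes>\<^bsub>S\<^esub> j0) \<in> P"
            using P.I_l_closed sC[OF that(2)] that(1) unfolding q_def by blast
          then have "(\<zero>\<^bsub>R\<^esub>, x \<otimes>\<^bsub>S\<^esub> a \<otimes>\<^bsub>S\<^esub> j0) \<otimes>\<^bsub>A\<^esub> (\<zero>\<^bsub>R\<^esub>, j0) \<in> P" using m1 ac that(2) by simp
          then show ?thesis using P.I_prime[OF sC z0] j0 ac that(2) unfolding q_def by blast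
        qed
      qed
      show "carrier S \<noteq> q"
      proof
        assume "carrier S = q"
        then have "\<one>\<^bsub>S\<^esub> \<in> q" by (metis S.one_closed)
        then show False using j0 j0c unfolding q_def by auto
      qed
      show "a \<in> q \<or> b \<in> q" if "a \<in> carrier S" "b \<in> carrier S" "a \<otimes>\<^bsub>S\<^esub> b \<in> q" for a b
      proof -
        have "(\<zero>\<^bsub>R\<^esub>, a \<otimes>\<^bsub>S\<^esub> b \<otimes>\<^bsub>S\<^esub> j0) \<otimes>\<^bsub>A\<^esub> (\<zero>\<^bsub>R\<^esub>, j0) \<in> P"
          using P.I_r_closed[OF _ z0] that(3) unfolding q_def by blast
        then have "(\<zero>\<^bsub>R\<^esub>, a \<otimes>\<^bsub>S\<^esub> j0) \<otimes>\<^bsub>A\<^esub> (\<zero>\<^bsub>R\<^esub>, b \<otimes>\<^bsub>S\<^esub> j0) \<in> P" using m1 that by simp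
        then show ?thesis using P.I_prime[OF sC sC] that unfolding q_def by blast
      qed
    qed
    moreover have "\<not> J \<subseteq> q"
    proof
      assume "J \<subseteq> q"
      then have "(\<zero>\<^bsub>R\<^esub>, j0 \<otimes>\<^bsub>S\<^esub> j0) \<in> P" using j0 unfolding q_def by auto
      then have "(\<zero>\<^bsub>R\<^esub>, j0) \<otimes>\<^bsub>A\<^esub> (\<zero>\<^bsub>R\<^esub>, j0) \<in> P" by simp
      then show False using P.I_prime[OF z0 z0] j0 by blast
    qed
    ultimately show ?thesis using eq by blast
  qed
qed

end

lemma ex1_image: assumes inj: "inj_on g XX" shows "(\<exists>!M. M \<in> g ` XX) \<longleftrightarrow> (\<exists>!x. x \<in> XX)"
proof
  assume "\<exists>!M. M \<in> g ` XX"
  then obtain M where M: "M \<in> g ` XX" "\<And>N. N \<in> g ` XX \<Longrightarrow> N = M" by blast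
  then obtain x where x: "x \<in> XX" "M = g x" by blast
  have "y = x" if "y \<in> XX" for y
    using M(2)[of "g y"] that x inj unfolding inj_on_def by blast
  then show "\<exists>!x. x \<in> XX" using x by blast
next
  assume "\<exists>!x. x \<in> XX"
  then obtain x where x: "x \<in> XX" "\<And>y. y \<in> XX \<Longrightarrow> y = x" by blast
  have "N = g x" if "N \<in> g ` XX" for N using that x by blast
  then show "\<exists>!M. M \<in> g ` XX" using x by blast
qed

lemma ex1_card: "(\<exists>!x. x \<in> XX) \<longleftrightarrow> finite XX \<and> card XX = 1"
proof -
  have "(\<exists>!x. x \<in> XX) \<longleftrightarrow> (\<exists>x. XX = {x})" by blast
  also have "\<dots> \<longleftrightarrow> card XX = Suc 0" by (rule card_1_singleton_iff[symmetric])
  also have "\<dots> \<longleftrightarrow> finite XX \<and> card XX = 1" using card.infinite by fastforce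
  finally show ?thesis .
qed

lemma ex1_union:
  assumes "XX = g ` U \<union> h ` V" "inj_on g U" "inj_on h V" "g ` U \<inter> h ` V = {}"
  shows "(\<exists>!x. x \<in> XX) \<longleftrightarrow> finite U \<and> finite V \<and> card U + card V = 1"
proof -
  have f1: "finite (g ` U) \<longleftrightarrow> finite U" by (rule finite_image_iff[OF assms(2)])
  have f2: "finite (h ` V) \<longleftrightarrow> finite V" by (rule finite_image_iff[OF assms(3)])
  have fin: "finite XX \<longleftrightarrow> finite U \<and> finite V"
    unfolding assms(1) finite_Un f1 f2 ..
  have "card XX = card U + card V" if "finite U" "finite V"
  proof -
    have "card XX = card (g ` U) + card (h ` V)"
      unfolding assms(1) using that assms(4) by (intro card_Un_disjoint) auto
    also have "\<dots> = card U + card V" using card_image[OF assms(2)] card_image[OF assms(3)] by simp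
    finally show ?thesis .
  qed
  then show ?thesis using fin ex1_card[of XX] by auto
qed

context amal begin

lemma max_PI: assumes M: "maximalideal (PI p) A" and p: "primeideal p R" shows "maximalideal p R"
proof -
  interpret p: primeideal p R by fact
  interpret M: maximalideal "PI p" A by fact
  show ?thesis
  proof (rule maximalidealI[OF p.is_ideal p.I_notcarr])
    fix I assume I: "ideal I R" "p \<subseteq> I" "I \<subseteq> carrier R"
    interpret I: ideal I R by fact
    have "PI p \<subseteq> PI I" using I unfolding PI_def by auto
    moreover have "PI I \<subseteq> carrier A" unfolding PI_def by auto
    ultimately have "PI I = PI p \<or> PI I = carrier A" using M.I_maximal[OF PI_ideal[OF I(1)]] by blast
    then show "I = p \<or> I = carrier R"
    proof
      assume e: "PI I = PI p"
      have "I \<subseteq> p"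
      proof
        fix r assume r: "r \<in> I"
        then have "(r, f r) \<in> PI I" using fC I(3) unfolding PI_def by auto
        then show "r \<in> p" using e unfolding PI_def by auto
      qed
      then show ?thesis using I by auto
    next
      assume e: "PI I = carrier A"
      then have "(\<one>\<^bsub>R\<^esub>, \<one>\<^bsub>S\<^esub>) \<in> PI I" using oneA by simp
      then have "\<one>\<^bsub>R\<^esub> \<in> I" unfolding PI_def by simp
      then show ?thesis using I.one_imp_carrier by simp
    qed
  qed
qed

lemma max_QI: assumes M: "maximalideal (QI q) A" and q: "primeideal q S" and nJ: "\<not> J \<subseteq> q"
  shows "maximalideal q S"
proof -
  interpret q: primeideal q S by fact
  interpret M: maximalideal "QI q" A by fact
  interpret Jj: ideal J S by (rule J)
  obtain j0 where j0: "j0 \<in> J" "j0 \<notin> q" using nJ by auto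
  have j0c: "j0 \<in> carrier S" using j0 J_sub by auto
  show ?thesis
  proof (rule maximalidealI[OF q.is_ideal q.I_notcarr])
    fix I assume I: "ideal I S" "q \<subseteq> I" "I \<subseteq> carrier S"
    interpret I: ideal I S by fact
    have "QI q \<subseteq> QI I" using I unfolding QI_def by auto
    moreover have "QI I \<subseteq> carrier A" unfolding QI_def by auto
    ultimately have "QI I = QI q \<or> QI I = carrier A" using M.I_maximal[OF QI_ideal[OF I(1)]] by blast
    then show "I = q \<or> I = carrier S"
    proof
      assume e: "QI I = QI q"
      have "I \<subseteq> q"
      proof
        fix s assume s: "s \<in> I"
        have sc: "s \<in> carrier S" using s I(3) by auto
        have "(\<zero>\<^bsub>R\<^esub>, s \<otimes>\<^bsub>S\<^esub> j0) \<in> QI I"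
          using zC[OF Jj.I_l_closed[OF j0(1) sc]] I.I_r_closed[OF s j0c] unfolding QI_def by auto
        then have "s \<otimes>\<^bsub>S\<^esub> j0 \<in> q" using e unfolding QI_def by auto
        then show "s \<in> q" using q.I_prime[OF sc j0c] j0 by blast
      qed
      then show ?thesis using I by auto
    next
      assume e: "QI I = carrier A"
      then have "(\<one>\<^bsub>R\<^esub>, \<one>\<^bsub>S\<^esub>) \<in> QI I" using oneA by simp
      then have "\<one>\<^bsub>S\<^esub> \<in> I" unfolding QI_def by simp
      then show ?thesis using I.one_imp_carrier by simp
    qed
  qed
qed

lemma PI_sub: assumes "p \<subseteq> carrier R" "PI p \<subseteq> PI m" shows "p \<subseteq> m"
proof
  fix r assume r: "r \<in> p"
  then have "(r, f r) \<in> PI p" using fC assms(1) unfolding PI_def by auto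
  then have "(r, f r) \<in> PI m" using assms(2) by blast
  then show "r \<in> m" unfolding PI_def by simp
qed

lemma PI_QI: assumes "ideal p R" "PI p \<subseteq> QI n" shows "J \<subseteq> n"
proof
  fix j assume j: "j \<in> J"
  have "\<zero>\<^bsub>R\<^esub> \<in> p" using assms(1) additive_subgroup.zero_closed ideal.axioms(1) by blast
  then have "(\<zero>\<^bsub>R\<^esub>, j) \<in> PI p" using zC[OF j] unfolding PI_def by auto
  then show "j \<in> n" using assms(2) unfolding QI_def by auto
qed

lemma QI_sub: assumes n: "primeideal n S" "\<not> J \<subseteq> n" and q: "ideal q S" and sub: "QI q \<subseteq> QI n"
  shows "q \<subseteq> n"
proof
  interpret n: primeideal n S by fact
  interpret q: ideal q S by fact
  interpret Jj: ideal J S by (rule J)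
  obtain j0 where j0: "j0 \<in> J" "j0 \<notin> n" using n by auto
  have j0c: "j0 \<in> carrier S" using j0 J_sub by auto
  fix s assume s: "s \<in> q"
  have sc: "s \<in> carrier S" using s q.a_subset by auto
  have "(\<zero>\<^bsub>R\<^esub>, s \<otimes>\<^bsub>S\<^esub> j0) \<in> QI q"
    using zC[OF Jj.I_l_closed[OF j0(1) sc]] q.I_r_closed[OF s j0c] unfolding QI_def by auto
  then have "s \<otimes>\<^bsub>S\<^esub> j0 \<in> n" using sub unfolding QI_def by auto
  then show "s \<in> n" using n.I_prime[OF sc j0c] j0 by blast
qed

lemma QI_PI: assumes q: "ideal q S"
  shows "QI q \<subseteq> PI m \<longleftrightarrow> {r \<in> carrier R. f r \<in> q <+>\<^bsub>S\<^esub> J} \<subseteq> m"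
proof
  interpret q: ideal q S by fact
  interpret Jj: ideal J S by (rule J)
  assume sub: "QI q \<subseteq> PI m"
  show "{r \<in> carrier R. f r \<in> q <+>\<^bsub>S\<^esub> J} \<subseteq> m"
  proof
    fix r assume "r \<in> {r \<in> carrier R. f r \<in> q <+>\<^bsub>S\<^esub> J}"
    then obtain a j where r: "r \<in> carrier R" "a \<in> q" "j \<in> J" "f r = a \<oplus>\<^bsub>S\<^esub> j"
      unfolding set_add_mem by auto
    have c: "a \<in> carrier S" "j \<in> carrier S" using r q.a_subset J_sub by auto
    have "f r \<oplus>\<^bsub>S\<^esub> \<ominus>\<^bsub>S\<^esub> j = a" using r c by (simp add: S.a_assoc S.r_neg)
    then have "(r, f r \<oplus>\<^bsub>S\<^esub> \<ominus>\<^bsub>S\<^esub> j) \<in> QI q"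
      using memC[OF r(1) Jj.a_inv_closed[OF r(3)]] r unfolding QI_def by auto
    then show "r \<in> m" using sub unfolding PI_def by auto
  qed
next
  interpret q: ideal q S by fact
  interpret Jj: ideal J S by (rule J)
  assume sub: "{r \<in> carrier R. f r \<in> q <+>\<^bsub>S\<^esub> J} \<subseteq> m"
  show "QI q \<subseteq> PI m"
  proof
    fix x assume x: "x \<in> QI q"
    then have xc: "x \<in> carrier A" "snd x \<in> q" unfolding QI_def by auto
    obtain r j where rj: "x = (r, f r \<oplus>\<^bsub>S\<^esub> j)" "r \<in> carrier R" "j \<in> J" using C_elemE[OF xc(1)] by blast
    have jc: "j \<in> carrier S" using rj J_sub by auto
    have "f r = (f r \<oplus>\<^bsub>S\<^esub> j) \<oplus>\<^bsub>S\<^esub> \<ominus>\<^bsub>S\<^esub> j" using rj jc by (simp add: S.a_assoc S.r_neg)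
    moreover have "f r \<oplus>\<^bsub>S\<^esub> j \<in> q" using xc rj by simp
    ultimately have "f r \<in> q <+>\<^bsub>S\<^esub> J" unfolding set_add_mem using Jj.a_inv_closed[OF rj(3)] by blast
    then have "r \<in> m" using sub rj by auto
    then show "x \<in> PI m" using xc rj unfolding PI_def by auto
  qed
qed

lemma E1: assumes p: "primeideal p R"
  shows "(\<exists>!M. maximalideal M A \<and> PI p \<subseteq> M) \<longleftrightarrow> (\<exists>!m. maximalideal m R \<and> p \<subseteq> m)"
proof -
  have pc: "p \<subseteq> carrier R" using p primeideal.axioms(1) ideal.axioms(1) additive_subgroup.a_subset by blast
  have eq: "{M. maximalideal M A \<and> PI p \<subseteq> M} = PI ` {m. maximalideal m R \<and> p \<subseteq> m}"
  proof
    show "{M. maximalideal M A \<and> PI p \<subseteq> M} \<subseteq> PI ` {m. maximalideal m R \<and> p \<subseteq> m}"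
    proof
      fix M assume M: "M \<in> {M. maximalideal M A \<and> PI p \<subseteq> M}"
      then have Mp: "primeideal M A" using cring.maximalideal_prime[OF A_cring] by blast
      show "M \<in> PI ` {m. maximalideal m R \<and> p \<subseteq> m}"
        using classify[OF Mp]
      proof
        assume "\<exists>m. primeideal m R \<and> M = PI m"
        then obtain m where m: "primeideal m R" "M = PI m" by blast
        then have "maximalideal m R" using max_PI M by blast
        moreover have "p \<subseteq> m" using PI_sub[OF pc] M m by blast
        ultimately show ?thesis using m by blast
      next
        assume "\<exists>n. primeideal n S \<and> \<not> J \<subseteq> n \<and> M = QI n"
        then obtain n where "\<not> J \<subseteq> n" "M = QI n" by blast
        then show ?thesis using PI_QI[OF primeideal.axioms(1)[OF p]] M by blast
      qed
    qed
    show "PI ` {m. maximalideal m R \<and> p \<subseteq> m} \<subseteq> {M. maximalideal M A \<and> PI p \<subseteq> M}"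
      using PI_max unfolding PI_def by auto
  qed
  have inj: "inj_on PI {m. maximalideal m R \<and> p \<subseteq> m}"
  proof (rule inj_onI)
    fix m m' assume "m \<in> {m. maximalideal m R \<and> p \<subseteq> m}" "m' \<in> {m. maximalideal m R \<and> p \<subseteq> m}" "PI m = PI m'"
    then show "m = m'" using PI_sub maximalideal.axioms(1) ideal.axioms(1) additive_subgroup.a_subset
      by (metis (no_types, lifting) mem_Collect_eq subset_antisym subset_refl)
  qed
  have "(\<exists>!M. maximalideal M A \<and> PI p \<subseteq> M) \<longleftrightarrow> (\<exists>!M. M \<in> {M. maximalideal M A \<and> PI p \<subseteq> M})" by simp
  also have "\<dots> \<longleftrightarrow> (\<exists>!m. m \<in> {m. maximalideal m R \<and> p \<subseteq> m})" unfolding eq by (rule ex1_image[OF inj])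
  finally show ?thesis by simp
qed


lemma E2: assumes q: "primeideal q S" and nJ: "\<not> J \<subseteq> q"
  shows "(\<exists>!M. maximalideal M A \<and> QI q \<subseteq> M) \<longleftrightarrow>
        (let Aa = (MaxSpec S \<inter> VarI S q) - VarI S J;
             B = MaxSpec R \<inter> VarI R {r \<in> carrier R. f r \<in> q <+>\<^bsub>S\<^esub> J}
         in finite Aa \<and> finite B \<and> card Aa + card B = 1)"
proof -
  define Aa where "Aa = (MaxSpec S \<inter> VarI S q) - VarI S J"
  define B where "B = MaxSpec R \<inter> VarI R {r \<in> carrier R. f r \<in> q <+>\<^bsub>S\<^esub> J}"
  have qi: "ideal q S" using q primeideal.axioms(1) by blast
  have Aa_char: "n \<in> Aa \<longleftrightarrow> maximalideal n S \<and> q \<subseteq> n \<and> \<not> J \<subseteq> n" for n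
    unfolding Aa_def MaxSpec_def VarI_def using S.maximalideal_prime by blast
  have B_char: "m \<in> B \<longleftrightarrow> maximalideal m R \<and> {r \<in> carrier R. f r \<in> q <+>\<^bsub>S\<^esub> J} \<subseteq> m" for m
    unfolding B_def MaxSpec_def VarI_def using R.maximalideal_prime by blast
  have eq: "{M. maximalideal M A \<and> QI q \<subseteq> M} = QI ` Aa \<union> PI ` B"
  proof
    show "{M. maximalideal M A \<and> QI q \<subseteq> M} \<subseteq> QI ` Aa \<union> PI ` B"
    proof
      fix M assume M: "M \<in> {M. maximalideal M A \<and> QI q \<subseteq> M}"
      then have Mp: "primeideal M A" using cring.maximalideal_prime[OF A_cring] by blast
      show "M \<in> QI ` Aa \<union> PI ` B"
        using classify[OF Mp]
      proof
        assume "\<exists>m. primeideal m R \<and> M = PI m"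
        then obtain m where m: "primeideal m R" "M = PI m" by blast
        then have "maximalideal m R" using max_PI M by blast
        moreover have "{r \<in> carrier R. f r \<in> q <+>\<^bsub>S\<^esub> J} \<subseteq> m" using QI_PI[OF qi] M m by blast
        ultimately show ?thesis using m B_char by blast
      next
        assume "\<exists>n. primeideal n S \<and> \<not> J \<subseteq> n \<and> M = QI n"
        then obtain n where n: "primeideal n S" "\<not> J \<subseteq> n" "M = QI n" by blast
        then have "maximalideal n S" using max_QI M by blast
        moreover have "q \<subseteq> n" using QI_sub[OF n(1,2) qi] M n(3) by blast
        ultimately show ?thesis using n Aa_char by blast
      qed
    qed
    show "QI ` Aa \<union> PI ` B \<subseteq> {M. maximalideal M A \<and> QI q \<subseteq> M}"
    proof
      fix M assume "M \<in> QI ` Aa \<union> PI ` B"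
      then show "M \<in> {M. maximalideal M A \<and> QI q \<subseteq> M}"
      proof
        assume "M \<in> QI ` Aa"
        then obtain n where n: "n \<in> Aa" "M = QI n" by blast
        then have "maximalideal M A" using QI_max Aa_char by blast
        moreover have "QI q \<subseteq> M" using n Aa_char[of n] unfolding QI_def by auto
        ultimately show ?thesis by blast
      next
        assume "M \<in> PI ` B"
        then obtain m where m: "m \<in> B" "M = PI m" by blast
        then have "maximalideal M A" using PI_max B_char by blast
        moreover have "QI q \<subseteq> M" using m B_char[of m] QI_PI[OF qi] by blast
        ultimately show ?thesis by blast
      qed
    qed
  qed
  have injQ: "inj_on QI Aa"
  proof (rule inj_onI)
    fix n n' assume n: "n \<in> Aa" "n' \<in> Aa" "QI n = QI n'"
    have "primeideal n S" "primeideal n' S" "ideal n S" "ideal n' S"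
      using n Aa_char S.maximalideal_prime maximalideal.axioms(1) by blast+
    then show "n = n'" using QI_sub n Aa_char by (metis subset_antisym subset_refl)
  qed
  have injP: "inj_on PI B"
  proof (rule inj_onI)
    fix m m' assume m: "m \<in> B" "m' \<in> B" "PI m = PI m'"
    have "m \<subseteq> carrier R" "m' \<subseteq> carrier R"
      using m B_char maximalideal.axioms(1) ideal.axioms(1) additive_subgroup.a_subset by blast+
    then show "m = m'" using PI_sub m(3) by (metis subset_antisym subset_refl)
  qed
  have disj: "QI ` Aa \<inter> PI ` B = {}"
  proof (rule ccontr)
    assume "QI ` Aa \<inter> PI ` B \<noteq> {}"
    then obtain n m where nm: "n \<in> Aa" "m \<in> B" "QI n = PI m" by blast
    have "ideal m R" using nm B_char maximalideal.axioms(1) by blast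
    then have "J \<subseteq> n" using PI_QI nm(3) by (metis subset_refl)
    then show False using nm Aa_char by blast
  qed
  have "(\<exists>!M. maximalideal M A \<and> QI q \<subseteq> M) \<longleftrightarrow> (\<exists>!M. M \<in> {M. maximalideal M A \<and> QI q \<subseteq> M})" by simp
  also have "\<dots> \<longleftrightarrow> finite Aa \<and> finite B \<and> card Aa + card B = 1"
    by (rule ex1_union[OF eq injQ injP disj])
  finally show ?thesis unfolding Aa_def B_def Let_def .
qed

end

theorem theorem3p4:
  fixes R :: "('a, 'm) ring_scheme" and S :: "('b, 'n) ring_scheme"
    and f :: "'a \<Rightarrow> 'b" and J :: "'b set"
  assumes "cring R" and "cring S"
    and "f \<in> ring_hom R S"
    and "ideal J S" and "J \<noteq> {\<zero>\<^bsub>S\<^esub>}" and "J \<noteq> carrier S"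
  shows "pm_ring (amalg R S f J) \<longleftrightarrow>
    (pm_ring R \<and>
     (\<forall>q. primeideal q S \<and> \<not> J \<subseteq> q \<longrightarrow>
        (let A = (MaxSpec S \<inter> VarI S q) - VarI S J;
             B = MaxSpec R \<inter> VarI R {r \<in> carrier R. f r \<in> q <+>\<^bsub>S\<^esub> J}
         in finite A \<and> finite B \<and> card A + card B = 1)))"
proof -
  interpret amal R S f J
    using assms by (simp add: amal_def amal_axioms_def ring_hom_cring_def ring_hom_cring_axioms_def)
  show ?thesis
  proof
    assume pm: "pm_ring A"
    have "pm_ring R" unfolding pm_ring_def
    proof (intro allI impI)
      fix p assume p: "primeideal p R"
      have "\<exists>!M. maximalideal M A \<and> PI p \<subseteq> M" using pm PI_prime[OF p] unfolding pm_ring_def by simp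
      then show "\<exists>!m. maximalideal m R \<and> p \<subseteq> m" using E1[OF p] by simp
    qed
    moreover have "\<forall>q. primeideal q S \<and> \<not> J \<subseteq> q \<longrightarrow>
        (let A = (MaxSpec S \<inter> VarI S q) - VarI S J;
             B = MaxSpec R \<inter> VarI R {r \<in> carrier R. f r \<in> q <+>\<^bsub>S\<^esub> J}
         in finite A \<and> finite B \<and> card A + card B = 1)"
    proof (intro allI impI)
      fix q assume q: "primeideal q S \<and> \<not> J \<subseteq> q"
      have "\<exists>!M. maximalideal M A \<and> QI q \<subseteq> M" using pm QI_prime[OF conjunct1[OF q]] unfolding pm_ring_def by simp
      then show "let A = (MaxSpec S \<inter> VarI S q) - VarI S J;
             B = MaxSpec R \<inter> VarI R {r \<in> carrier R. f r \<in> q <+>\<^bsub>S\<^esub> J}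
         in finite A \<and> finite B \<and> card A + card B = 1" by (rule E2[OF conjunct1[OF q] conjunct2[OF q], THEN iffD1])
    qed
    ultimately show "pm_ring R \<and> (\<forall>q. primeideal q S \<and> \<not> J \<subseteq> q \<longrightarrow>
        (let A = (MaxSpec S \<inter> VarI S q) - VarI S J;
             B = MaxSpec R \<inter> VarI R {r \<in> carrier R. f r \<in> q <+>\<^bsub>S\<^esub> J}
         in finite A \<and> finite B \<and> card A + card B = 1))" by (rule conjI)
  next
    assume H: "pm_ring R \<and> (\<forall>q. primeideal q S \<and> \<not> J \<subseteq> q \<longrightarrow>
        (let A = (MaxSpec S \<inter> VarI S q) - VarI S J;
             B = MaxSpec R \<inter> VarI R {r \<in> carrier R. f r \<in> q <+>\<^bsub>S\<^esub> J}
         in finite A \<and> finite B \<and> card A + card B = 1))"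
    show "pm_ring A" unfolding pm_ring_def
    proof (intro allI impI)
      fix P assume P: "primeideal P A"
      show "\<exists>!M. maximalideal M A \<and> P \<subseteq> M"
        using classify[OF P]
      proof
        assume "\<exists>p. primeideal p R \<and> P = PI p"
        then obtain p where p: "primeideal p R" "P = PI p" by blast
        have "\<exists>!m. maximalideal m R \<and> p \<subseteq> m" using conjunct1[OF H] p(1) unfolding pm_ring_def by simp
        then show ?thesis unfolding p(2) by (rule E1[OF p(1), THEN iffD2])
      next
        assume "\<exists>q. primeideal q S \<and> \<not> J \<subseteq> q \<and> P = QI q"
        then obtain q where q: "primeideal q S" "\<not> J \<subseteq> q" "P = QI q" by blast
        have "let A = (MaxSpec S \<inter> VarI S q) - VarI S J;
             B = MaxSpec R \<inter> VarI R {r \<in> carrier R. f r \<in> q <+>\<^bsub>S\<^esub> J}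
         in finite A \<and> finite B \<and> card A + card B = 1" using conjunct2[OF H] q(1,2) by simp
        then show ?thesis unfolding q(3) by (rule E2[OF q(1,2), THEN iffD2])
      qed
    qed
  qed
qed

end
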